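(* Let $q\ge2$ and let $U$ be a $q\times q$ row-stochastic matrix with strictly positive entries. There is a constant $C_3$ independent of $n$ such that for all sufficiently large $n$, every $\mathbf{x}\in[1:q]^n$ and every $a\ne b\in[1:q]$, $$d_{\mathrm{TV}}\big(W_{(\mathbf{x},a)},W_{(\mathbf{x},b)}\big)\le\frac{C_3(\log n)^{(q-2)/2}}{\sqrt n}.$$
   Context: For a vector $\mathbf{x}\in[1:q]^m$, $W_{\mathbf{x}}$ denotes the distribution of the composition $(N(1|\mathbf{Y}),\dots,N(q|\mathbf{Y}))$, $N(c|\mathbf{Y})=|\{i:Y_i=c\}|$, of the output $\mathbf{Y}$ when $\mathbf{x}$ is sent through $m$ independent uses of the DMC $U$ (i.e. $\Pr[\mathbf{Y}=\mathbf{y}]=\prod_iU(y_i|x_i)$). $(\mathbf{x},a)\in[1:q]^{n+1}$ denotes $\mathbf{x}$ with the symbol $a$ appended. $d_{\mathrm{TV}}(P,Q)=\frac12\sum|P-Q|$. Logarithms base 2. *)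

theory Defs
  imports Complex_Main
begin

text \<open>A channel U is a function U :: nat => nat => real,
  U i j = U(j|i) = probability of output j given input i (row-stochastic matrix).\<close>

definition words :: "nat \<Rightarrow> nat \<Rightarrow> nat list set" where
  "words q m = {ys. length ys = m \<and> set ys \<subseteq> {1..q}}"

definition composition :: "nat list \<Rightarrow> nat \<Rightarrow> nat" where
  "composition ys = (\<lambda>c. length (filter (\<lambda>y. y = c) ys))"

definition out_prob :: "(nat \<Rightarrow> nat \<Rightarrow> real) \<Rightarrow> nat list \<Rightarrow> nat list \<Rightarrow> real" where
  "out_prob U xs ys = (\<Prod>i<length xs. U (xs ! i) (ys ! i))"

definition W :: "nat \<Rightarrow> (nat \<Rightarrow> nat \<Rightarrow> real) \<Rightarrow> nat list \<Rightarrow> (nat \<Rightarrow> nat) \<Rightarrow> real" where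
  "W q U xs c = (\<Sum>ys\<in>{ys \<in> words q (length xs). composition ys = c}. out_prob U xs ys)"

text \<open>Total variation distance between W_xs and W_xs' (inputs of equal length m);
  the sum ranges over all possible compositions of length-m output words.\<close>
definition dTV_W :: "nat \<Rightarrow> (nat \<Rightarrow> nat \<Rightarrow> real) \<Rightarrow> nat list \<Rightarrow> nat list \<Rightarrow> real" where
  "dTV_W q U xs xs' = 1/2 * (\<Sum>c\<in>composition ` words q (length xs). \<bar>W q U xs c - W q U xs' c\<bar>)"

end

theory Submission
  imports Defs
begin


definition shift :: "nat \<Rightarrow> ((nat \<Rightarrow> nat) \<Rightarrow> real) \<Rightarrow> (nat \<Rightarrow> nat) \<Rightarrow> real" where
  "shift c f = (\<lambda>x. if 0 < x c then f (x(c := x c - 1)) else 0)"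

definition L1 :: "((nat \<Rightarrow> nat) \<Rightarrow> real) \<Rightarrow> real" where
  "L1 f = (\<Sum>x\<in>{x. f x \<noteq> 0}. \<bar>f x\<bar>)"

definition fs :: "((nat \<Rightarrow> nat) \<Rightarrow> real) \<Rightarrow> bool" where
  "fs f \<longleftrightarrow> finite {x. f x \<noteq> 0}"

definition dl0 :: "(nat \<Rightarrow> nat) \<Rightarrow> real" where
  "dl0 = (\<lambda>x. if x = (\<lambda>_. 0) then 1 else 0)"

lemma L1_eq:
  assumes "finite A" "\<And>x. x \<notin> A \<Longrightarrow> f x = 0"
  shows "L1 f = (\<Sum>x\<in>A. \<bar>f x\<bar>)"
  unfolding L1_def by (rule sum.mono_neutral_left) (use assms in auto)

lemma L1_nonneg: "L1 f \<ge> 0"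
  unfolding L1_def by (simp add: sum_nonneg)

lemma L1_zero: "L1 (\<lambda>x. 0) = 0"
  unfolding L1_def by simp

lemma fs_add: "fs f \<Longrightarrow> fs g \<Longrightarrow> fs (\<lambda>x. f x + g x)"
  unfolding fs_def by (rule finite_subset[of _ "{x. f x \<noteq> 0} \<union> {x. g x \<noteq> 0}"]) auto

lemma fs_diff: "fs f \<Longrightarrow> fs g \<Longrightarrow> fs (\<lambda>x. f x - g x)"
  unfolding fs_def by (rule finite_subset[of _ "{x. f x \<noteq> 0} \<union> {x. g x \<noteq> 0}"]) auto

lemma fs_scale: "fs f \<Longrightarrow> fs (\<lambda>x. k * f x)"
  unfolding fs_def by (rule finite_subset[of _ "{x. f x \<noteq> 0}"]) auto

lemma fs_sum: "finite I \<Longrightarrow> (\<And>i. i \<in> I \<Longrightarrow> fs (F i)) \<Longrightarrow> fs (\<lambda>x. \<Sum>i\<in>I. F i x)"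
proof (induction I rule: finite_induct)
  case empty
  then show ?case by (simp add: fs_def)
next
  case (insert a I)
  then show ?case using fs_add[of "F a" "\<lambda>x. \<Sum>i\<in>I. F i x"] by simp
qed

lemma fs_dl0: "fs dl0"
  unfolding fs_def dl0_def by (rule finite_subset[of _ "{\<lambda>_. 0}"]) auto

lemma L1_dl0: "L1 dl0 = 1"
  by (subst L1_eq[of "{\<lambda>_. 0}"]) (auto simp: dl0_def)

lemma L1_add:
  assumes "fs f" "fs g"
  shows "L1 (\<lambda>x. f x + g x) \<le> L1 f + L1 g"
proof -
  let ?S = "{x. f x \<noteq> 0} \<union> {x. g x \<noteq> 0}"
  have fin: "finite ?S" using assms by (auto simp: fs_def)
  have "L1 (\<lambda>x. f x + g x) = (\<Sum>x\<in>?S. \<bar>f x + g x\<bar>)" by (rule L1_eq[OF fin]) auto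
  also have "\<dots> \<le> (\<Sum>x\<in>?S. \<bar>f x\<bar> + \<bar>g x\<bar>)" by (rule sum_mono) (rule abs_triangle_ineq)
  also have "\<dots> = (\<Sum>x\<in>?S. \<bar>f x\<bar>) + (\<Sum>x\<in>?S. \<bar>g x\<bar>)" by (rule sum.distrib)
  also have "(\<Sum>x\<in>?S. \<bar>f x\<bar>) = L1 f" by (rule L1_eq[OF fin, symmetric]) auto
  also have "(\<Sum>x\<in>?S. \<bar>g x\<bar>) = L1 g" by (rule L1_eq[OF fin, symmetric]) auto
  finally show ?thesis .
qed

lemma L1_scale: "L1 (\<lambda>x. k * f x) = \<bar>k\<bar> * L1 f"
proof (cases "k = 0")
  case True
  then show ?thesis by (simp add: L1_zero)
next
  case False
  then have "{x. k * f x \<noteq> 0} = {x. f x \<noteq> 0}" by auto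
  then show ?thesis unfolding L1_def by (simp add: sum_distrib_left abs_mult)
qed

lemma L1_neg: "L1 (\<lambda>x. - f x) = L1 f"
  using L1_scale[of "-1" f] by simp

lemma L1_diff:
  assumes "fs f" "fs g"
  shows "L1 (\<lambda>x. f x - g x) \<le> L1 f + L1 g"
  using L1_add[of f "\<lambda>x. - g x"] assms fs_scale[of g "-1"] L1_neg[of g] by simp

lemma L1_sum:
  "finite I \<Longrightarrow> (\<And>i. i \<in> I \<Longrightarrow> fs (F i)) \<Longrightarrow> L1 (\<lambda>x. \<Sum>i\<in>I. F i x) \<le> (\<Sum>i\<in>I. L1 (F i))"
proof (induction I rule: finite_induct)
  case empty
  then show ?case by (simp add: L1_zero)
next
  case (insert a I)
  have "L1 (\<lambda>x. \<Sum>i\<in>insert a I. F i x) = L1 (\<lambda>x. F a x + (\<Sum>i\<in>I. F i x))"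
    using insert by simp
  also have "\<dots> \<le> L1 (F a) + L1 (\<lambda>x. \<Sum>i\<in>I. F i x)"
    by (rule L1_add) (use insert fs_sum in auto)
  also have "\<dots> \<le> L1 (F a) + (\<Sum>i\<in>I. L1 (F i))" using insert by simp
  finally show ?case using insert by simp
qed

lemma shift_supp: "{x. shift c f x \<noteq> 0} = (\<lambda>y. y(c := y c + 1)) ` {x. f x \<noteq> 0}"
proof (rule set_eqI, rule iffI)
  fix x assume "x \<in> {x. shift c f x \<noteq> 0}"
  then have "0 < x c" "f (x(c := x c - 1)) \<noteq> 0" by (auto simp: shift_def split: if_splits)
  moreover have "x = (x(c := x c - 1))(c := (x(c := x c - 1)) c + 1)" using \<open>0 < x c\<close> by auto
  ultimately show "x \<in> (\<lambda>y. y(c := y c + 1)) ` {x. f x \<noteq> 0}" by blast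
next
  fix x assume "x \<in> (\<lambda>y. y(c := y c + 1)) ` {x. f x \<noteq> 0}"
  then obtain y where "x = y(c := y c + 1)" "f y \<noteq> 0" by auto
  then show "x \<in> {x. shift c f x \<noteq> 0}" by (auto simp: shift_def)
qed

lemma inj_upd_suc: "inj (\<lambda>y::nat\<Rightarrow>nat. y(c := y c + 1))"
proof (rule injI)
  fix x y :: "nat \<Rightarrow> nat" assume "x(c := x c + 1) = y(c := y c + 1)"
  then have "\<forall>t. (x(c := x c + 1)) t = (y(c := y c + 1)) t" by simp
  then show "x = y" by (metis add_right_cancel fun_upd_apply ext)
qed

lemma L1_shift: "L1 (shift c f) = L1 f"
proof -
  have "L1 (shift c f) = (\<Sum>x\<in>(\<lambda>y. y(c := y c + 1)) ` {x. f x \<noteq> 0}. \<bar>shift c f x\<bar>)"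
    unfolding L1_def shift_supp ..
  also have "\<dots> = (\<Sum>y\<in>{x. f x \<noteq> 0}. \<bar>shift c f (y(c := y c + 1))\<bar>)"
    by (rule sum.reindex[OF inj_on_subset[OF inj_upd_suc subset_UNIV], unfolded comp_def])
  also have "\<dots> = L1 f" unfolding L1_def by (rule sum.cong) (auto simp: shift_def)
  finally show ?thesis .
qed

lemma fs_shift: "fs f \<Longrightarrow> fs (shift c f)"
  unfolding fs_def shift_supp by simp

lemma shift_comm: "shift c (shift d f) = shift d (shift c f)"
  unfolding shift_def by (cases "c = d") (auto simp: fun_eq_iff fun_upd_twist)

lemma shift_add: "shift c (\<lambda>x. f x + g x) = (\<lambda>x. shift c f x + shift c g x)"
  unfolding shift_def by auto

lemma shift_diff: "shift c (\<lambda>x. f x - g x) = (\<lambda>x. shift c f x - shift c g x)"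
  unfolding shift_def by auto

lemma shift_scale: "shift c (\<lambda>x. k * f x) = (\<lambda>x. k * shift c f x)"
  unfolding shift_def by auto

lemma shift_sum: "shift c (\<lambda>x. \<Sum>i\<in>I. F i x) = (\<lambda>x. \<Sum>i\<in>I. shift c (F i) x)"
  unfolding shift_def by auto

lemma funpow_shift_L1: "L1 ((shift c ^^ k) f) = L1 f"
  by (induction k) (auto simp: L1_shift)

lemma funpow_shift_fs: "fs f \<Longrightarrow> fs ((shift c ^^ k) f)"
  by (induction k) (auto simp: fs_shift)

lemma funpow_shift_comm: "shift d ((shift c ^^ k) f) = (shift c ^^ k) (shift d f)"
  by (induction k) (auto simp: shift_comm)



lemma finite_words: "finite (words q m)"
proof -
  have "words q m \<subseteq> {ys. set ys \<subseteq> {1..q} \<and> length ys = m}" by (auto simp: words_def)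
  then show ?thesis by (rule finite_subset) (rule finite_lists_length_eq, simp)
qed

lemma words_Suc: "words q (Suc n) = (\<lambda>(zs,y). zs @ [y]) ` (words q n \<times> {1..q})"
proof (rule set_eqI, rule iffI)
  fix ys assume "ys \<in> words q (Suc n)"
  then have l: "length ys = Suc n" and s: "set ys \<subseteq> {1..q}" by (auto simp: words_def)
  then have ne: "ys \<noteq> []" by auto
  have e: "ys = butlast ys @ [last ys]" using ne by simp
  have "set (butlast ys) \<subseteq> {1..q}" using s by (meson in_set_butlastD subset_iff)
  moreover have "last ys \<in> {1..q}" using s ne last_in_set by blast
  ultimately have "(butlast ys, last ys) \<in> words q n \<times> {1..q}" using l by (auto simp: words_def)
  then show "ys \<in> (\<lambda>(zs,y). zs @ [y]) ` (words q n \<times> {1..q})" using e by force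
next
  fix ys assume "ys \<in> (\<lambda>(zs,y). zs @ [y]) ` (words q n \<times> {1..q})"
  then show "ys \<in> words q (Suc n)" by (auto simp: words_def)
qed

lemma inj_snoc: "inj_on (\<lambda>(zs,y). zs @ [y]) A"
  by (auto simp: inj_on_def)

lemma out_prob_snoc:
  assumes "length zs = length xs"
  shows "out_prob U (xs @ [a]) (zs @ [y]) = out_prob U xs zs * U a y"
proof -
  have "out_prob U (xs @ [a]) (zs @ [y]) = (\<Prod>i<Suc (length xs). U ((xs @ [a]) ! i) ((zs @ [y]) ! i))"
    by (simp add: out_prob_def)
  also have "\<dots> = (\<Prod>i<length xs. U ((xs @ [a]) ! i) ((zs @ [y]) ! i)) * U a y"
    using assms by (simp add: nth_append)
  also have "(\<Prod>i<length xs. U ((xs @ [a]) ! i) ((zs @ [y]) ! i)) = out_prob U xs zs"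
    unfolding out_prob_def using assms by (intro prod.cong) (auto simp: nth_append)
  finally show ?thesis .
qed

lemma composition_snoc: "composition (zs @ [y]) = (composition zs)(y := composition zs y + 1)"
  by (auto simp: composition_def fun_eq_iff)

lemma W_alt: "W q U xs c = (\<Sum>ys\<in>words q (length xs). if composition ys = c then out_prob U xs ys else 0)"
  unfolding W_def by (simp add: sum.inter_filter[OF finite_words])

lemma W_Nil: "W q U [] = dl0"
proof
  fix c
  have "words q 0 = {[]}" by (auto simp: words_def)
  moreover have "composition [] = (\<lambda>_. 0)" by (simp add: composition_def)
  ultimately show "W q U [] c = dl0 c"
    by (auto simp: W_alt dl0_def out_prob_def)
qed

lemma comp_snoc_eq:
  "(composition (zs @ [y]) = c) \<longleftrightarrow> (0 < c y \<and> composition zs = c(y := c y - 1))"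
  unfolding composition_snoc by (auto simp: fun_eq_iff split: if_splits)

lemma W_snoc: "W q U (xs @ [a]) = (\<lambda>x. \<Sum>y\<in>{1..q}. U a y * shift y (W q U xs) x)"
proof
  fix c
  let ?n = "length xs"
  have "W q U (xs @ [a]) c = (\<Sum>ys\<in>words q (Suc ?n). if composition ys = c then out_prob U (xs @ [a]) ys else 0)"
    by (simp add: W_alt)
  also have "\<dots> = (\<Sum>p\<in>words q ?n \<times> {1..q}. if composition (fst p @ [snd p]) = c then out_prob U xs (fst p) * U a (snd p) else 0)"
    unfolding words_Suc
    by (subst sum.reindex[OF inj_snoc]) (auto intro!: sum.cong simp: out_prob_snoc words_def)
  also have "\<dots> = (\<Sum>zs\<in>words q ?n. \<Sum>y\<in>{1..q}. if composition (zs @ [y]) = c then out_prob U xs zs * U a y else 0)"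
    by (subst sum.cartesian_product) (simp add: case_prod_unfold)
  also have "\<dots> = (\<Sum>y\<in>{1..q}. \<Sum>zs\<in>words q ?n. if composition (zs @ [y]) = c then out_prob U xs zs * U a y else 0)"
    by (rule sum.swap)
  also have "\<dots> = (\<Sum>y\<in>{1..q}. U a y * shift y (W q U xs) c)"
  proof (rule sum.cong[OF refl])
    fix y
    show "(\<Sum>zs\<in>words q ?n. if composition (zs @ [y]) = c then out_prob U xs zs * U a y else 0)
          = U a y * shift y (W q U xs) c"
      unfolding comp_snoc_eq shift_def W_alt
      by (cases "0 < c y") (auto simp: sum_distrib_left intro!: sum.cong)
  qed
  finally show "W q U (xs @ [a]) c = (\<Sum>y\<in>{1..q}. U a y * shift y (W q U xs) c)" .
qed

lemma W_outside: "c \<notin> composition ` words q (length xs) \<Longrightarrow> W q U xs c = 0"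
  unfolding W_def by (rule sum.neutral) auto

lemma fs_W: "fs (W q U xs)"
  unfolding fs_def
  by (rule finite_subset[of _ "composition ` words q (length xs)"]) (use finite_words W_outside in blast)+

lemma dTV_L1:
  assumes "length xs = length xs'"
  shows "dTV_W q U xs xs' = 1/2 * L1 (\<lambda>c. W q U xs c - W q U xs' c)"
  unfolding dTV_W_def using assms
  by (subst L1_eq[of "composition ` words q (length xs)"]) (auto simp: finite_words W_outside)



definition Aop :: "nat \<Rightarrow> nat \<Rightarrow> ((nat \<Rightarrow> nat) \<Rightarrow> real) \<Rightarrow> (nat \<Rightarrow> nat) \<Rightarrow> real" where
  "Aop i j f = (\<lambda>x. shift i f x + shift j f x)"

definition Dop :: "nat \<Rightarrow> nat \<Rightarrow> ((nat \<Rightarrow> nat) \<Rightarrow> real) \<Rightarrow> (nat \<Rightarrow> nat) \<Rightarrow> real" where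
  "Dop i j f = (\<lambda>x. shift i f x - shift j f x)"

lemma fs_Aop: "fs f \<Longrightarrow> fs (Aop i j f)"
  unfolding Aop_def by (intro fs_add fs_shift)

lemma fs_Dop: "fs f \<Longrightarrow> fs (Dop i j f)"
  unfolding Dop_def by (intro fs_diff fs_shift)

lemma fs_Apow: "fs f \<Longrightarrow> fs ((Aop i j ^^ m) f)"
  by (induction m) (auto simp: fs_Aop)

lemma Aop_comb:
  "Aop i j (\<lambda>x. k * g x + (\<Sum>c\<in>I. w c * shift c f x))
   = (\<lambda>x. k * Aop i j g x + (\<Sum>c\<in>I. w c * shift c (Aop i j f) x))"
  unfolding Aop_def shift_add shift_scale shift_sum
  by (simp add: shift_scale shift_comm[of i] shift_comm[of j] algebra_simps sum.distrib)

lemma Dop_comb: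
  "Dop i j (\<lambda>x. k * g x + (\<Sum>c\<in>I. w c * shift c f x))
   = (\<lambda>x. k * Dop i j g x + (\<Sum>c\<in>I. w c * shift c (Dop i j f) x))"
  unfolding Dop_def shift_add shift_scale shift_sum
  by (simp add: shift_scale shift_comm[of i] shift_comm[of j] algebra_simps sum_subtractf shift_diff)

lemma Apow_comb:
  "(Aop i j ^^ m) (\<lambda>x. k * g x + (\<Sum>c\<in>I. w c * shift c f x))
   = (\<lambda>x. k * (Aop i j ^^ m) g x + (\<Sum>c\<in>I. w c * shift c ((Aop i j ^^ m) f) x))"
  by (induction m) (auto simp: Aop_comb)

lemma Dop_Aop: "Dop i j (Aop i j f) = Aop i j (Dop i j f)"
  unfolding Dop_def Aop_def shift_add shift_diff
  by (auto simp: shift_comm[of i j] fun_eq_iff)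

lemma pascal_sum:
  "(\<Sum>k\<le>Suc n. real (Suc n choose k) * F k) = (\<Sum>k\<le>n. real (n choose k) * (F k + F (Suc k)))"
proof -
  have a: "(\<Sum>k\<le>Suc n. real (n choose k) * F k) = (\<Sum>k\<le>n. real (n choose k) * F k)"
    by simp
  have b: "(\<Sum>k\<le>Suc n. real (n choose k) * F k) = F 0 + (\<Sum>k\<le>n. real (n choose Suc k) * F (Suc k))"
    by (subst sum.atMost_Suc_shift) simp
  have "(\<Sum>k\<le>Suc n. real (Suc n choose k) * F k) = F 0 + (\<Sum>k\<le>n. real (Suc n choose Suc k) * F (Suc k))"
    by (subst sum.atMost_Suc_shift) simp
  also have "\<dots> = F 0 + (\<Sum>k\<le>n. real (n choose Suc k) * F (Suc k)) + (\<Sum>k\<le>n. real (n choose k) * F (Suc k))"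
    by (simp add: algebra_simps sum.distrib)
  also have "\<dots> = (\<Sum>k\<le>n. real (n choose k) * F k) + (\<Sum>k\<le>n. real (n choose k) * F (Suc k))"
    using a b by (simp add: binomial_eq_0)
  also have "\<dots> = (\<Sum>k\<le>n. real (n choose k) * (F k + F (Suc k)))"
    by (simp add: distrib_left sum.distrib)
  finally show ?thesis .
qed

definition Phi :: "nat \<Rightarrow> nat \<Rightarrow> nat \<Rightarrow> real" where
  "Phi i j m = L1 ((Aop i j ^^ m) (Dop i j dl0))"

context
  fixes q :: nat and U :: "nat \<Rightarrow> nat \<Rightarrow> real" and i j :: nat and d :: real
  assumes ij: "i \<in> {1..q}" "j \<in> {1..q}" "i \<noteq> j"
    and dpos: "d > 0"
    and Umin: "\<And>a c. a \<in> {1..q} \<Longrightarrow> c \<in> {1..q} \<Longrightarrow> d \<le> U a c"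
    and Urow: "\<And>a. a \<in> {1..q} \<Longrightarrow> (\<Sum>c=1..q. U a c) = 1"
begin

definition r :: "nat \<Rightarrow> nat \<Rightarrow> real" where
  "r a c = U a c - (if c = i then d else 0) - (if c = j then d else 0)"

lemma r_nonneg: "a \<in> {1..q} \<Longrightarrow> c \<in> {1..q} \<Longrightarrow> r a c \<ge> 0"
  using Umin[of a c] dpos ij by (auto simp: r_def)

lemma r_sum: "a \<in> {1..q} \<Longrightarrow> (\<Sum>c\<in>{1..q}. r a c) = 1 - 2 * d"
  using Urow[of a] ij unfolding r_def by (simp add: sum_subtractf)

lemma e_nonneg: "1 - 2 * d \<ge> 0"
proof -
  have "(\<Sum>c\<in>{1..q}. r 1 c) \<ge> 0" using ij by (intro sum_nonneg r_nonneg) auto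
  then show ?thesis using r_sum[of 1] ij by simp
qed

lemma decomp:
  assumes "a \<in> {1..q}"
  shows "(\<lambda>x. \<Sum>y\<in>{1..q}. U a y * shift y f x) = (\<lambda>x. d * Aop i j f x + (\<Sum>y\<in>{1..q}. r a y * shift y f x))"
proof
  fix x
  have "(\<Sum>y\<in>{1..q}. U a y * shift y f x) = (\<Sum>y\<in>{1..q}. r a y * shift y f x
      + (if y = i then d * shift y f x else 0) + (if y = j then d * shift y f x else 0))"
    by (rule sum.cong) (auto simp: r_def algebra_simps)
  also have "\<dots> = (\<Sum>y\<in>{1..q}. r a y * shift y f x) + d * shift i f x + d * shift j f x"
    using ij by (simp add: sum.distrib)
  finally show "(\<Sum>y\<in>{1..q}. U a y * shift y f x) = d * Aop i j f x + (\<Sum>y\<in>{1..q}. r a y * shift y f x)"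
    by (simp add: Aop_def algebra_simps)
qed


lemma main_ind:
  assumes "set xs \<subseteq> {1..q}"
  shows "L1 ((Aop i j ^^ m) (Dop i j (W q U xs)))
     \<le> (\<Sum>l\<le>length xs. real (length xs choose l) * d ^ l * (1 - 2 * d) ^ (length xs - l) * Phi i j (m + l))"
  using assms
proof (induction xs arbitrary: m rule: rev_induct)
  case Nil
  then show ?case by (simp add: W_Nil Phi_def)
next
  case (snoc a xs)
  let ?n = "length xs"
  let ?e = "1 - 2 * d"
  let ?G = "Dop i j (W q U xs)"
  let ?S = "\<lambda>m. (\<Sum>l\<le>?n. real (?n choose l) * d ^ l * ?e ^ (?n - l) * Phi i j (m + l))"
  have a: "a \<in> {1..q}" and xs: "set xs \<subseteq> {1..q}" using snoc.prems by auto
  have fsG: "fs ?G" by (intro fs_Dop fs_W)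
  have "(Aop i j ^^ m) (Dop i j (W q U (xs @ [a])))
      = (\<lambda>x. d * (Aop i j ^^ Suc m) ?G x + (\<Sum>y\<in>{1..q}. r a y * shift y ((Aop i j ^^ m) ?G) x))"
    unfolding W_snoc decomp[OF a] Dop_comb Apow_comb Dop_Aop
    by (simp add: funpow_swap1)
  then have "L1 ((Aop i j ^^ m) (Dop i j (W q U (xs @ [a]))))
      = L1 (\<lambda>x. d * (Aop i j ^^ Suc m) ?G x + (\<Sum>y\<in>{1..q}. r a y * shift y ((Aop i j ^^ m) ?G) x))"
    by simp
  also have "\<dots> \<le> L1 (\<lambda>x. d * (Aop i j ^^ Suc m) ?G x) + L1 (\<lambda>x. \<Sum>y\<in>{1..q}. r a y * shift y ((Aop i j ^^ m) ?G) x)"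
    by (intro L1_add fs_scale fs_sum fs_shift fs_Apow fsG) auto
  also have "L1 (\<lambda>x. \<Sum>y\<in>{1..q}. r a y * shift y ((Aop i j ^^ m) ?G) x)
      \<le> (\<Sum>y\<in>{1..q}. L1 (\<lambda>x. r a y * shift y ((Aop i j ^^ m) ?G) x))"
    by (intro L1_sum fs_scale fs_shift fs_Apow fsG) auto
  also have "\<dots> = (\<Sum>y\<in>{1..q}. r a y * L1 ((Aop i j ^^ m) ?G))"
    by (rule sum.cong) (auto simp: L1_scale L1_shift r_nonneg[OF a])
  also have "\<dots> = ?e * L1 ((Aop i j ^^ m) ?G)"
    using r_sum[OF a] by (simp add: sum_distrib_right[symmetric])
  also have "L1 (\<lambda>x. d * (Aop i j ^^ Suc m) ?G x) = d * L1 ((Aop i j ^^ Suc m) ?G)"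
    using dpos by (simp add: L1_scale)
  finally have 1: "L1 ((Aop i j ^^ m) (Dop i j (W q U (xs @ [a]))))
     \<le> d * L1 ((Aop i j ^^ Suc m) ?G) + ?e * L1 ((Aop i j ^^ m) ?G)" by simp
  have 2: "d * L1 ((Aop i j ^^ Suc m) ?G) + ?e * L1 ((Aop i j ^^ m) ?G) \<le> d * ?S (Suc m) + ?e * ?S m"
    using snoc.IH[OF xs, of "Suc m"] snoc.IH[OF xs, of m] dpos e_nonneg
    by (intro add_mono mult_left_mono) auto
  have 3: "d * ?S (Suc m) + ?e * ?S m
     = (\<Sum>l\<le>Suc ?n. real (Suc ?n choose l) * d ^ l * ?e ^ (Suc ?n - l) * Phi i j (m + l))"
  proof -
    have "(\<Sum>l\<le>Suc ?n. real (Suc ?n choose l) * d ^ l * ?e ^ (Suc ?n - l) * Phi i j (m + l))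
       = (\<Sum>l\<le>Suc ?n. real (Suc ?n choose l) * (d ^ l * ?e ^ (Suc ?n - l) * Phi i j (m + l)))"
      by (simp add: mult.assoc)
    also have "\<dots> = (\<Sum>k\<le>?n. real (?n choose k) * (d ^ k * ?e ^ (Suc ?n - k) * Phi i j (m + k)
                 + d ^ Suc k * ?e ^ (Suc ?n - Suc k) * Phi i j (m + Suc k)))"
      by (rule pascal_sum)
    also have "\<dots> = (\<Sum>k\<le>?n. d * (real (?n choose k) * d ^ k * ?e ^ (?n - k) * Phi i j (Suc m + k))
                 + ?e * (real (?n choose k) * d ^ k * ?e ^ (?n - k) * Phi i j (m + k)))"
      by (rule sum.cong[OF refl]) (auto simp: Suc_diff_le algebra_simps)
    also have "\<dots> = d * ?S (Suc m) + ?e * ?S m"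
      by (simp add: sum.distrib sum_distrib_left)
    finally show ?thesis by simp
  qed
  show ?case using 1 2 3 by simp
qed

end



lemma Apow_binom:
  "(Aop i j ^^ l) g = (\<lambda>x. \<Sum>k\<le>l. real (l choose k) * (shift i ^^ k) ((shift j ^^ (l - k)) g) x)"
proof (induction l)
  case 0
  then show ?case by simp
next
  case (Suc l)
  have "(Aop i j ^^ Suc l) g = Aop i j ((Aop i j ^^ l) g)" by simp
  also have "\<dots> = (\<lambda>x. \<Sum>k\<le>l. real (l choose k) * ((shift i ^^ Suc k) ((shift j ^^ (l - k)) g) x
        + (shift i ^^ k) ((shift j ^^ Suc (l - k)) g) x))"
    unfolding Suc Aop_def shift_sum shift_scale
    by (simp add: funpow_shift_comm sum.distrib algebra_simps)
  also have "\<dots> = (\<lambda>x. \<Sum>k\<le>Suc l. real (Suc l choose k) * (shift i ^^ k) ((shift j ^^ (Suc l - k)) g) x)"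
  proof
    fix x
    show "(\<Sum>k\<le>l. real (l choose k) * ((shift i ^^ Suc k) ((shift j ^^ (l - k)) g) x
        + (shift i ^^ k) ((shift j ^^ Suc (l - k)) g) x))
      = (\<Sum>k\<le>Suc l. real (Suc l choose k) * (shift i ^^ k) ((shift j ^^ (Suc l - k)) g) x)"
      unfolding pascal_sum
      by (rule sum.cong[OF refl]) (auto simp: Suc_diff_le algebra_simps)
  qed
  finally show ?case .
qed

lemma Apow_Dop: "(Aop i j ^^ l) (Dop i j g) = Dop i j ((Aop i j ^^ l) g)"
  by (induction l) (auto simp: Dop_Aop)

definition ecoef :: "nat \<Rightarrow> nat \<Rightarrow> real" where
  "ecoef l k = (if k = 0 then 0 else real (l choose (k - 1))) - real (l choose k)"

lemma ADform:
  "(Aop i j ^^ l) (Dop i j g) = (\<lambda>x. \<Sum>k\<le>Suc l. ecoef l k * (shift i ^^ k) ((shift j ^^ (Suc l - k)) g) x)"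
proof
  fix x
  let ?P = "\<lambda>k. (shift i ^^ k) ((shift j ^^ (Suc l - k)) g) x"
  have "(Aop i j ^^ l) (Dop i j g) x = Dop i j ((Aop i j ^^ l) g) x" by (simp add: Apow_Dop)
  also have "\<dots> = (\<Sum>k\<le>l. real (l choose k) * (?P (Suc k) - ?P k))"
    unfolding Dop_def Apow_binom shift_sum shift_scale
    by (auto simp: funpow_shift_comm Suc_diff_le algebra_simps sum_subtractf intro!: sum.cong)
  also have "\<dots> = (\<Sum>k\<le>l. real (l choose k) * ?P (Suc k)) - (\<Sum>k\<le>l. real (l choose k) * ?P k)"
    by (simp add: algebra_simps sum_subtractf)
  also have "(\<Sum>k\<le>l. real (l choose k) * ?P (Suc k)) = (\<Sum>k\<le>Suc l. (if k = 0 then 0 else real (l choose (k - 1))) * ?P k)"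
    by (subst sum.atMost_Suc_shift) simp
  also have "(\<Sum>k\<le>l. real (l choose k) * ?P k) = (\<Sum>k\<le>Suc l. real (l choose k) * ?P k)"
    by (simp add: binomial_eq_0)
  finally show "(Aop i j ^^ l) (Dop i j g) x = (\<Sum>k\<le>Suc l. ecoef l k * ?P k)"
    by (simp add: ecoef_def algebra_simps sum_subtractf)
qed

lemma Phi_le_ecoef: "L1 ((Aop i j ^^ l) (Dop i j dl0)) \<le> (\<Sum>k\<le>Suc l. \<bar>ecoef l k\<bar>)"
proof -
  have "L1 ((Aop i j ^^ l) (Dop i j dl0))
      \<le> (\<Sum>k\<le>Suc l. L1 (\<lambda>x. ecoef l k * (shift i ^^ k) ((shift j ^^ (Suc l - k)) dl0) x))"
    unfolding ADform by (intro L1_sum fs_scale funpow_shift_fs fs_dl0) auto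
  also have "\<dots> = (\<Sum>k\<le>Suc l. \<bar>ecoef l k\<bar>)"
    by (simp add: L1_scale funpow_shift_L1 L1_dl0)
  finally show ?thesis .
qed

lemma ecoef_eq:
  assumes "k \<le> Suc l"
  shows "real (Suc l) * ecoef l k = real (Suc l choose k) * (2 * real k - real (Suc l))"
proof -
  have A: "real k * real (Suc l choose k) = real (Suc l) * (if k = 0 then 0 else real (l choose (k - 1)))"
  proof (cases k)
    case 0 then show ?thesis by simp
  next
    case (Suc k')
    have h: "real (Suc k') * real (Suc l choose Suc k') = real (Suc l) * real (l choose k')"
      using Suc_times_binomial[of k' l] by (metis of_nat_mult)
    show ?thesis unfolding Suc using h by simp
  qed
  have B: "real (Suc l - k) * real (Suc l choose k) = real (Suc l) * real (l choose k)"
    using binomial_absorb_comp[of "Suc l" k] by (metis diff_Suc_1 of_nat_mult)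
  have C: "real (Suc l - k) = real (Suc l) - real k" using assms by (simp add: of_nat_diff)
  show ?thesis using A B C unfolding ecoef_def by (simp add: algebra_simps)
qed

lemma row_sum_real: "(\<Sum>k\<le>n. real (n choose k)) = 2 ^ n"
  using choose_row_sum[of n] by (metis of_nat_numeral of_nat_power of_nat_sum)

lemma var_sum: "(\<Sum>k\<le>n. real (n choose k) * (2 * real k - real n)^2) = real n * 2 ^ n"
proof (induction n)
  case 0
  then show ?case by simp
next
  case (Suc n)
  have "(\<Sum>k\<le>Suc n. real (Suc n choose k) * (2 * real k - real (Suc n))^2)
      = (\<Sum>k\<le>n. real (n choose k) * ((2 * real k - real (Suc n))^2 + (2 * real (Suc k) - real (Suc n))^2))"
    by (rule pascal_sum)
  also have "\<dots> = (\<Sum>k\<le>n. 2 * (real (n choose k) * (2 * real k - real n)^2) + 2 * real (n choose k))"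
    by (rule sum.cong[OF refl]) (simp add: power2_eq_square algebra_simps)
  also have "\<dots> = 2 * (real n * 2 ^ n) + 2 * 2 ^ n"
    using Suc row_sum_real[of n] by (simp add: sum.distrib sum_distrib_left[symmetric])
  also have "\<dots> = real (Suc n) * 2 ^ Suc n" by (simp add: algebra_simps)
  finally show ?case .
qed

lemma abs_amgm:
  fixes x s :: real assumes "s > 0"
  shows "\<bar>x\<bar> \<le> (x^2 / s + s) / 2"
proof -
  have "0 \<le> (\<bar>x\<bar> - s)^2" by simp
  then have "2 * s * \<bar>x\<bar> \<le> x^2 + s^2" by (simp add: power2_eq_square algebra_simps)
  then show ?thesis using assms by (simp add: field_simps power2_eq_square)
qed

lemma ecoef_sum_bound: "(\<Sum>k\<le>Suc l. \<bar>ecoef l k\<bar>) \<le> 2 ^ Suc l / sqrt (real (Suc l))"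
proof -
  let ?N = "real (Suc l)"
  let ?s = "sqrt ?N"
  have spos: "?s > 0" by simp
  have ss: "?s * ?s = ?N" by simp
  have "(\<Sum>k\<le>Suc l. \<bar>ecoef l k\<bar>) = (\<Sum>k\<le>Suc l. real (Suc l choose k) * \<bar>2 * real k - ?N\<bar> / ?N)"
  proof (rule sum.cong[OF refl])
    fix k assume "k \<in> {..Suc l}"
    then have "?N * ecoef l k = real (Suc l choose k) * (2 * real k - ?N)" by (intro ecoef_eq) auto
    then have "ecoef l k = real (Suc l choose k) * (2 * real k - ?N) / ?N"
      by (simp add: field_simps del: of_nat_Suc)
    then show "\<bar>ecoef l k\<bar> = real (Suc l choose k) * \<bar>2 * real k - ?N\<bar> / ?N"
      by (simp add: abs_mult del: of_nat_Suc)
  qed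
  also have "\<dots> \<le> (\<Sum>k\<le>Suc l. real (Suc l choose k) * (((2 * real k - ?N)^2 / ?s + ?s) / 2) / ?N)"
    by (intro sum_mono divide_right_mono mult_left_mono abs_amgm spos) auto
  also have "\<dots> = ((\<Sum>k\<le>Suc l. real (Suc l choose k) * (2 * real k - ?N)^2) / ?s
                   + ?s * (\<Sum>k\<le>Suc l. real (Suc l choose k))) / (2 * ?N)"
    by (simp add: sum_divide_distrib sum_distrib_left sum.distrib algebra_simps add_divide_distrib del: of_nat_Suc)
  also have "\<dots> = (?N * 2 ^ Suc l / ?s + ?s * 2 ^ Suc l) / (2 * ?N)"
    by (simp only: var_sum row_sum_real)
  also have "\<dots> = 2 ^ Suc l / ?s"
    using spos ss by (simp add: field_simps del: of_nat_Suc)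
  finally show ?thesis .
qed

lemma Phi_bound: "L1 ((Aop i j ^^ l) (Dop i j dl0)) \<le> 2 ^ Suc l / sqrt (real (Suc l))"
  using Phi_le_ecoef ecoef_sum_bound order_trans by blast



lemma w_sum:
  fixes p :: real
  shows "(\<Sum>l\<le>n. real (n choose l) * p ^ l * (1 - p) ^ (n - l)) = 1"
  using binomial_ring[of p "1 - p" n] by simp

lemma w_inv:
  fixes p :: real assumes p: "0 < p" "p \<le> 1"
  shows "(\<Sum>l\<le>n. real (n choose l) * p ^ l * (1 - p) ^ (n - l) / real (Suc l)) \<le> 1 / (real (Suc n) * p)"
proof -
  let ?f = "\<lambda>k. real (Suc n choose k) * p ^ k * (1 - p) ^ (Suc n - k)"
  have "(\<Sum>l\<le>n. real (n choose l) * p ^ l * (1 - p) ^ (n - l) / real (Suc l))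
      = (\<Sum>l\<le>n. ?f (Suc l) / (real (Suc n) * p))"
  proof (rule sum.cong[OF refl])
    fix l
    have h: "real (Suc l) * real (Suc n choose Suc l) = real (Suc n) * real (n choose l)"
      using Suc_times_binomial[of l n] by (metis of_nat_mult)
    have "real (n choose l) = real (Suc l) * real (Suc n choose Suc l) / real (Suc n)"
      using h by (simp add: field_simps del: of_nat_Suc binomial_Suc_Suc)
    then show "real (n choose l) * p ^ l * (1 - p) ^ (n - l) / real (Suc l) = ?f (Suc l) / (real (Suc n) * p)"
      using p by (simp add: field_simps del: of_nat_Suc binomial_Suc_Suc)
  qed
  also have "\<dots> = (\<Sum>l\<le>n. ?f (Suc l)) / (real (Suc n) * p)"
    by (simp add: sum_divide_distrib)
  also have "(\<Sum>l\<le>n. ?f (Suc l)) = (\<Sum>k\<le>Suc n. ?f k) - ?f 0"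
    by (subst sum.atMost_Suc_shift) simp
  also have "\<dots> \<le> 1"
    using w_sum[of "Suc n" p] p by simp
  finally show ?thesis using p by (simp add: divide_right_mono)
qed

lemma w_sqrt:
  fixes p :: real assumes p: "0 < p" "p \<le> 1"
  shows "(\<Sum>l\<le>n. real (n choose l) * p ^ l * (1 - p) ^ (n - l) * (2 / sqrt (real (Suc l))))
     \<le> 2 / sqrt (real (Suc n) * p)"
proof -
  let ?w = "\<lambda>l. real (n choose l) * p ^ l * (1 - p) ^ (n - l)"
  let ?t = "sqrt (real (Suc n) * p)"
  have tpos: "?t > 0" using p by simp
  have tt: "?t * ?t = real (Suc n) * p" using p by simp
  have wnn: "\<And>l. ?w l \<ge> 0" using p by simp
  have key: "\<And>l. 1 / sqrt (real (Suc l)) \<le> (?t / real (Suc l) + 1 / ?t) / 2"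
  proof -
    fix l
    have "\<bar>1 / sqrt (real (Suc l))\<bar> \<le> ((1 / sqrt (real (Suc l)))^2 / (1 / ?t) + 1 / ?t) / 2"
      by (rule abs_amgm) (use tpos in simp)
    moreover have "(1 / sqrt (real (Suc l)))^2 = 1 / real (Suc l)"
      by (simp add: power_divide del: of_nat_Suc)
    ultimately show "1 / sqrt (real (Suc l)) \<le> (?t / real (Suc l) + 1 / ?t) / 2" by simp
  qed
  have "(\<Sum>l\<le>n. ?w l * (2 / sqrt (real (Suc l)))) = 2 * (\<Sum>l\<le>n. ?w l * (1 / sqrt (real (Suc l))))"
    unfolding sum_distrib_left by (rule sum.cong) (simp_all add: field_simps del: of_nat_Suc)
  also have "\<dots> \<le> 2 * (\<Sum>l\<le>n. ?w l * ((?t / real (Suc l) + 1 / ?t) / 2))"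
    by (intro mult_left_mono sum_mono mult_left_mono key wnn) auto
  also have "\<dots> = (\<Sum>l\<le>n. ?t * (?w l / real (Suc l)) + ?w l / ?t)"
    unfolding sum_distrib_left by (rule sum.cong) (simp_all add: field_simps del: of_nat_Suc)
  also have "\<dots> = ?t * (\<Sum>l\<le>n. ?w l / real (Suc l)) + (\<Sum>l\<le>n. ?w l) / ?t"
    by (simp only: sum.distrib sum_distrib_left sum_divide_distrib)
  also have "\<dots> \<le> ?t * (1 / (real (Suc n) * p)) + 1 / ?t"
    using w_inv[OF p, of n] w_sum[of n p] tpos by (intro add_mono mult_left_mono) auto
  also have "?t * (1 / (real (Suc n) * p)) = ?t * (1 / (?t * ?t))" using tt by simp
  also have "\<dots> = 1 / ?t"
  proof -
    have g: "\<And>u::real. u > 0 \<Longrightarrow> u * (1 / (u * u)) = 1 / u" by (simp add: field_simps)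
    show ?thesis by (rule g[OF tpos])
  qed
  also have "1 / ?t + 1 / ?t = 2 / ?t" by simp
  finally show ?thesis .
qed

lemma D_bound:
  fixes q :: nat and U :: "nat \<Rightarrow> nat \<Rightarrow> real" and i j :: nat and d :: real
  assumes ij: "i \<in> {1..q}" "j \<in> {1..q}" "i \<noteq> j"
    and dpos: "d > 0"
    and Umin: "\<And>a c. a \<in> {1..q} \<Longrightarrow> c \<in> {1..q} \<Longrightarrow> d \<le> U a c"
    and Urow: "\<And>a. a \<in> {1..q} \<Longrightarrow> (\<Sum>c=1..q. U a c) = 1"
    and xs: "set xs \<subseteq> {1..q}"
  shows "L1 (Dop i j (W q U xs)) \<le> 2 / sqrt (real (Suc (length xs)) * (2 * d))"
proof -
  let ?n = "length xs"
  have e: "1 - 2 * d \<ge> 0" by (rule e_nonneg[OF ij dpos Umin Urow])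
  have "L1 (Dop i j (W q U xs))
      \<le> (\<Sum>l\<le>?n. real (?n choose l) * d ^ l * (1 - 2 * d) ^ (?n - l) * L1 ((Aop i j ^^ l) (Dop i j dl0)))"
    using main_ind[where q=q and U=U and i=i and j=j and d=d and xs=xs and m=0, OF ij dpos Umin Urow xs]
    by (simp add: Phi_def)
  also have "\<dots> \<le> (\<Sum>l\<le>?n. real (?n choose l) * d ^ l * (1 - 2 * d) ^ (?n - l) * (2 ^ Suc l / sqrt (real (Suc l))))"
    using dpos e by (intro sum_mono mult_left_mono Phi_bound) auto
  also have "\<dots> = (\<Sum>l\<le>?n. real (?n choose l) * (2 * d) ^ l * (1 - 2 * d) ^ (?n - l) * (2 / sqrt (real (Suc l))))"
    by (rule sum.cong[OF refl]) (simp add: power_mult_distrib field_simps del: of_nat_Suc)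
  also have "\<dots> \<le> 2 / sqrt (real (Suc ?n) * (2 * d))"
    using dpos e by (intro w_sqrt) auto
  finally show ?thesis .
qed



lemma dTV_bound:
  fixes q :: nat and U :: "nat \<Rightarrow> nat \<Rightarrow> real" and d :: real
  assumes dpos: "d > 0"
    and Umin: "\<And>a c. a \<in> {1..q} \<Longrightarrow> c \<in> {1..q} \<Longrightarrow> d \<le> U a c"
    and Urow: "\<And>a. a \<in> {1..q} \<Longrightarrow> (\<Sum>c=1..q. U a c) = 1"
    and q: "q \<ge> 1"
    and xs: "set xs \<subseteq> {1..q}" and a: "a \<in> {1..q}" and b: "b \<in> {1..q}"
  shows "dTV_W q U (xs @ [a]) (xs @ [b]) \<le> 2 / sqrt (real (Suc (length xs)) * (2 * d))"
proof -
  let ?B = "2 / sqrt (real (Suc (length xs)) * (2 * d))"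
  let ?G = "W q U xs"
  have Unn: "\<And>a c. a \<in> {1..q} \<Longrightarrow> c \<in> {1..q} \<Longrightarrow> 0 \<le> U a c"
    using Umin dpos by (meson less_le_trans less_imp_le)
  have eq: "(\<lambda>c. W q U (xs @ [a]) c - W q U (xs @ [b]) c)
      = (\<lambda>x. \<Sum>y\<in>{1..q}. (U a y - U b y) * Dop y 1 ?G x)"
  proof
    fix x
    have z: "(\<Sum>y\<in>{1..q}. (U a y - U b y)) = 0" using Urow[OF a] Urow[OF b] by (simp add: sum_subtractf)
    have "(\<Sum>y\<in>{1..q}. (U a y - U b y) * Dop y 1 ?G x)
        = (\<Sum>y\<in>{1..q}. (U a y - U b y) * shift y ?G x - (U a y - U b y) * shift 1 ?G x)"
      by (rule sum.cong) (simp_all add: Dop_def right_diff_distrib)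
    also have "\<dots> = (\<Sum>y\<in>{1..q}. (U a y - U b y) * shift y ?G x) - (\<Sum>y\<in>{1..q}. (U a y - U b y) * shift 1 ?G x)"
      by (rule sum_subtractf)
    also have "\<dots> = (\<Sum>y\<in>{1..q}. (U a y - U b y) * shift y ?G x) - (\<Sum>y\<in>{1..q}. (U a y - U b y)) * shift 1 ?G x"
      by (simp only: sum_distrib_right)
    also have "\<dots> = (\<Sum>y\<in>{1..q}. (U a y - U b y) * shift y ?G x)"
      by (simp only: z mult_zero_left diff_zero)
    also have "\<dots> = (\<Sum>y\<in>{1..q}. U a y * shift y ?G x) - (\<Sum>y\<in>{1..q}. U b y * shift y ?G x)"
      by (simp add: left_diff_distrib sum_subtractf)
    finally show "W q U (xs @ [a]) x - W q U (xs @ [b]) x = (\<Sum>y\<in>{1..q}. (U a y - U b y) * Dop y 1 ?G x)"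
      by (simp add: W_snoc)
  qed
  have Dy: "L1 (Dop y 1 ?G) \<le> ?B" if y: "y \<in> {1..q}" for y
  proof (cases "y = 1")
    case True
    have "Dop y 1 ?G = (\<lambda>x. 0)" using True by (simp add: Dop_def)
    moreover have "0 \<le> ?B" using dpos by (intro divide_nonneg_nonneg) auto
    ultimately show ?thesis by (simp add: L1_zero)
  next
    case False
    show ?thesis by (rule D_bound[OF y _ False dpos Umin Urow xs]) (use q in auto)
  qed
  have dt: "dTV_W q U (xs @ [a]) (xs @ [b]) = 1/2 * L1 (\<lambda>x. \<Sum>y\<in>{1..q}. (U a y - U b y) * Dop y 1 ?G x)"
    by (simp add: dTV_L1 eq)
  have "L1 (\<lambda>x. \<Sum>y\<in>{1..q}. (U a y - U b y) * Dop y 1 ?G x) \<le> (\<Sum>y\<in>{1..q}. L1 (\<lambda>x. (U a y - U b y) * Dop y 1 ?G x))"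
    proof (rule L1_sum)
    show "finite {1..q}" by simp
    fix y show "fs (\<lambda>x. (U a y - U b y) * Dop y 1 ?G x)" by (rule fs_scale, rule fs_Dop, rule fs_W)
  qed
  also have "\<dots> = (\<Sum>y\<in>{1..q}. \<bar>U a y - U b y\<bar> * L1 (Dop y 1 ?G))"
    by (rule sum.cong[OF refl]) (rule L1_scale)
  also have "\<dots> \<le> (\<Sum>y\<in>{1..q}. (U a y + U b y) * ?B)"
  proof (rule sum_mono)
    fix y assume y: "y \<in> {1..q}"
    have h: "\<bar>U a y - U b y\<bar> \<le> U a y + U b y" using Unn[OF a y] Unn[OF b y] by linarith
    show "\<bar>U a y - U b y\<bar> * L1 (Dop y 1 ?G) \<le> (U a y + U b y) * ?B"
    proof (rule mult_mono[OF _ Dy[OF y]])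
      show "\<bar>U a y - U b y\<bar> \<le> U a y + U b y" by (rule h)
      show "0 \<le> U a y + U b y" using Unn[OF a y] Unn[OF b y] by linarith
      show "0 \<le> L1 (Dop y 1 ?G)" by (rule L1_nonneg)
    qed
  qed
  also have "\<dots> = 2 * ?B"
  proof -
    have "(\<Sum>y\<in>{1..q}. (U a y + U b y) * ?B) = ((\<Sum>y\<in>{1..q}. U a y) + (\<Sum>y\<in>{1..q}. U b y)) * ?B"
      by (simp only: sum_distrib_right[symmetric] sum.distrib)
    then show ?thesis using Urow[OF a] Urow[OF b] by simp
  qed
  finally show ?thesis unfolding dt by simp
qed



theorem lemma4:
  fixes q :: nat and U :: "nat \<Rightarrow> nat \<Rightarrow> real"
  assumes "q \<ge> 2"
    and "\<And>i j. i \<in> {1..q} \<Longrightarrow> j \<in> {1..q} \<Longrightarrow> U i j > 0"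
    and "\<And>i. i \<in> {1..q} \<Longrightarrow> (\<Sum>j=1..q. U i j) = 1"
  shows "\<exists>C3::real. \<exists>N::nat. \<forall>n\<ge>N. \<forall>xs \<in> words q n. \<forall>a\<in>{1..q}. \<forall>b\<in>{1..q}. a \<noteq> b \<longrightarrow>
           dTV_W q U (xs @ [a]) (xs @ [b]) \<le> C3 * (log 2 (real n)) powr ((real q - 2) / 2) / sqrt (real n)"
proof -
  let ?S = "(\<lambda>(a,c). U a c) ` ({1..q} \<times> {1..q})"
  define d where "d = Min ?S"
  have finS: "finite ?S" by simp
  have neS: "?S \<noteq> {}" using assms(1) by auto
  have "d \<in> ?S" unfolding d_def using finS neS by (rule Min_in)
  then have dpos: "d > 0" using assms(2) by auto
  have Umin: "\<And>a c. a \<in> {1..q} \<Longrightarrow> c \<in> {1..q} \<Longrightarrow> d \<le> U a c"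
  proof -
    fix a c assume "a \<in> {1..q}" "c \<in> {1..q}"
    then have "U a c \<in> ?S" by force
    then show "d \<le> U a c" unfolding d_def using finS Min_le by blast
  qed
  let ?C = "2 / sqrt (2 * d)"
  show ?thesis
  proof (intro exI[of _ ?C] exI[of _ "2::nat"] allI impI ballI)
    fix n :: nat and xs a b
    assume n: "2 \<le> n" and xs: "xs \<in> words q n" and a: "a \<in> {1..q}" and b: "b \<in> {1..q}" and "a \<noteq> b"
    have len: "length xs = n" and sxs: "set xs \<subseteq> {1..q}" using xs by (auto simp: words_def)
    have "dTV_W q U (xs @ [a]) (xs @ [b]) \<le> 2 / sqrt (real (Suc n) * (2 * d))"
      using dTV_bound[OF dpos Umin assms(3) _ sxs a b] assms(1) len by simp
    also have "\<dots> \<le> 2 / sqrt (real n * (2 * d))"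
      using n dpos by (intro divide_left_mono real_sqrt_le_mono mult_right_mono mult_pos_pos) auto
    also have "\<dots> = ?C / sqrt (real n)"
      by (simp add: real_sqrt_mult)
    also have "\<dots> \<le> ?C * (log 2 (real n)) powr ((real q - 2) / 2) / sqrt (real n)"
    proof -
      have "log 2 (real n) \<ge> log 2 2" using n by (subst log_le_cancel_iff) auto
      then have l1: "log 2 (real n) \<ge> 1" by simp
      have "(log 2 (real n)) powr ((real q - 2) / 2) \<ge> 1"
        using l1 assms(1) by (intro ge_one_powr_ge_zero) auto
      moreover have "?C \<ge> 0" using dpos by simp
      ultimately have "?C * 1 \<le> ?C * (log 2 (real n)) powr ((real q - 2) / 2)"
        by (intro mult_left_mono) auto
      then show ?thesis by (intro divide_right_mono) auto
    qed
    finally show "dTV_W q U (xs @ [a]) (xs @ [b]) \<le> ?C * (log 2 (real n)) powr ((real q - 2) / 2) / sqrt (real n)" .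
  qed
qed


end
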